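(* Let $X$ be a topological space, let $Y$ be a functionally closed subset of $X$, let $(g,h)$ be a countable pair of Hahn on $X$, and let $f_0:X\to\overline{\mathbb R}$ be a continuous function such that $g(y)\le f_0(y)\le h(y)$ for all $y\in Y$. Then there exists a continuous function $f:X\to\overline{\mathbb R}$ such that $f(y)=f_0(y)$ for all $y\in Y$ and $g(x)\le f(x)\le h(x)$ for all $x\in X$.
   Context: $\overline{\mathbb R}=[-\infty,+\infty]$ with the order topology. A set $A\subseteq X$ is functionally closed if $A=\alpha^{-1}(0)$ for some continuous $\alpha:X\to[0,1]$. A pair $(g,h)$ of functions $g,h:X\to\overline{\mathbb R}$ is a countable pair of Hahn if there are continuous functions $g_n,h_n:X\to\overline{\mathbb R}$ ($n\in\mathbb N$) such that $g(x)=\inf_{n\in\mathbb N}g_n(x)\le\sup_{n\in\mathbb N}h_n(x)=h(x)$ for every $x\in X$. *)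

theory Defs
  imports "HOL-Analysis.Analysis" "HOL-Library.Extended_Real"
begin

definition functionally_closed :: "'a topology \<Rightarrow> 'a set \<Rightarrow> bool" where
  "functionally_closed X A \<longleftrightarrow>
     (\<exists>\<alpha>. continuous_map X (top_of_set {0..1::real}) \<alpha> \<and>
          A = {x \<in> topspace X. \<alpha> x = 0})"

definition countable_Hahn_pair ::
    "'a topology \<Rightarrow> ('a \<Rightarrow> ereal) \<Rightarrow> ('a \<Rightarrow> ereal) \<Rightarrow> bool" where
  "countable_Hahn_pair X g h \<longleftrightarrow>
     (\<exists>(gn :: nat \<Rightarrow> 'a \<Rightarrow> ereal) (hn :: nat \<Rightarrow> 'a \<Rightarrow> ereal).
        (\<forall>n. continuous_map X (euclidean :: ereal topology) (gn n)) \<and>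
        (\<forall>n. continuous_map X (euclidean :: ereal topology) (hn n)) \<and>
        (\<forall>x \<in> topspace X. g x = (INF n. gn n x) \<and> h x = (SUP n. hn n x) \<and> g x \<le> h x))"

end

theory Submission
  imports Defs
begin


lemma core_insert:
  fixes X :: "'a topology" and a b :: "nat \<Rightarrow> 'a \<Rightarrow> real"
  assumes conta: "\<And>n. continuous_map X euclideanreal (a n)"
    and contb: "\<And>n. continuous_map X euclideanreal (b n)"
    and bda: "\<And>n x. x \<in> topspace X \<Longrightarrow> -1 \<le> a n x \<and> a n x \<le> 1"
    and bdb: "\<And>n x. x \<in> topspace X \<Longrightarrow> -1 \<le> b n x \<and> b n x \<le> 1"
    and sep: "\<And>x s t. x \<in> topspace X \<Longrightarrow> s < t \<Longrightarrow> (\<exists>n. b n x < t) \<or> (\<exists>n. s < a n x)"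
  shows "\<exists>\<phi>. continuous_map X euclideanreal \<phi> \<and>
          (\<forall>x \<in> topspace X. -1 \<le> \<phi> x \<and> \<phi> x \<le> 1 \<and>
             ((\<forall>n. \<phi> x \<le> b n x) \<longrightarrow> (\<forall>n. a n x \<le> \<phi> x)) \<and>
             ((\<forall>n. a n x \<le> \<phi> x) \<longrightarrow> (\<forall>n. \<phi> x \<le> b n x)))"
proof -
  define P where "P n x t = max 0 (t - b n x) - max 0 (a n x - t)" for n x t
  define \<Phi> where "\<Phi> x t = (\<Sum>n. (1/2::real)^n * P n x t)" for x t
  have Pbd: "\<bar>P n x t\<bar> \<le> \<bar>t\<bar> + 1" if "x \<in> topspace X" for n x t
    using bda[OF that, of n] bdb[OF that, of n] unfolding P_def by (auto simp: max_def abs_if)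
  have summ: "summable (\<lambda>n. (1/2::real)^n * P n x t)" if "x \<in> topspace X" for x t
  proof (rule summable_comparison_test[of _ "\<lambda>n. (1/2::real)^n * (\<bar>t\<bar> + 1)"])
    show "\<exists>N. \<forall>n\<ge>N. norm ((1/2::real)^n * P n x t) \<le> (1/2)^n * (\<bar>t\<bar> + 1)"
      using Pbd[OF that] by (auto simp: abs_mult intro!: mult_left_mono)
    show "summable (\<lambda>n. (1/2::real)^n * (\<bar>t\<bar> + 1))"
      by (intro summable_mult2) simp
  qed
  have geo: "(\<Sum>n. (1/2::real)^n) = 2"
    using suminf_geometric[of "1/2::real"] by simp
  have strict: "\<Phi> x s < \<Phi> x t" if x: "x \<in> topspace X" and st: "s < t" for x s t
  proof -
    have "\<Phi> x t - \<Phi> x s = (\<Sum>n. (1/2::real)^n * P n x t - (1/2)^n * P n x s)"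
      unfolding \<Phi>_def by (intro suminf_diff summ x)
    also have "\<dots> > 0"
    proof -
      have mono: "P n x s \<le> P n x t" for n
        using st unfolding P_def by (auto simp: max_def)
      have "\<exists>i. P i x s < P i x t"
      proof -
        from sep[OF x st] obtain i where "b i x < t \<or> s < a i x" by blast
        then have "P i x s < P i x t" using st unfolding P_def by (auto simp: max_def)
        then show ?thesis by blast
      qed
      then obtain i where i: "P i x s < P i x t" by blast
      show ?thesis
      proof (rule suminf_pos2[where i=i])
        show "summable (\<lambda>n. (1/2::real)^n * P n x t - (1/2)^n * P n x s)"
          by (intro summable_diff summ x)
        show "0 \<le> (1/2::real)^n * P n x t - (1/2)^n * P n x s" for n
          using mono[of n] by (simp add: right_diff_distrib[symmetric])
        show "0 < (1/2::real)^i * P i x t - (1/2)^i * P i x s"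
          using i by (simp add: right_diff_distrib[symmetric])
      qed
    qed
    finally show ?thesis by simp
  qed
  have mono: "\<Phi> x s \<le> \<Phi> x t" if x: "x \<in> topspace X" and st: "s \<le> t" for x s t
    using strict[OF x, of s t] st by (cases "s = t") auto
  have lip: "\<Phi> x t - \<Phi> x s \<le> 4 * (t - s)" if x: "x \<in> topspace X" and st: "s \<le> t" for x s t
  proof -
    have "\<Phi> x t - \<Phi> x s = (\<Sum>n. (1/2::real)^n * P n x t - (1/2)^n * P n x s)"
      unfolding \<Phi>_def by (intro suminf_diff summ x)
    also have "\<dots> \<le> (\<Sum>n. (1/2::real)^n * (2 * (t - s)))"
    proof (rule suminf_le)
      fix n
      have pp: "P n x t - P n x s \<le> 2 * (t - s)" using st unfolding P_def by (auto simp: max_def)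
      show "(1/2::real)^n * P n x t - (1/2)^n * P n x s \<le> (1/2)^n * (2 * (t - s))"
        using mult_left_mono[OF pp, of "(1/2::real)^n"] by (simp add: right_diff_distrib)
    next
      show "summable (\<lambda>n. (1/2::real)^n * P n x t - (1/2)^n * P n x s)"
        by (intro summable_diff summ x)
      show "summable (\<lambda>n. (1/2::real)^n * (2 * (t - s)))"
        by (rule summable_mult2) simp
    qed
    also have "\<dots> = 4 * (t - s)"
      using suminf_mult2[of "\<lambda>n. (1/2::real)^n" "2 * (t - s)"] geo by simp
    finally show ?thesis .
  qed
  have lipsch: "4-lipschitz_on UNIV (\<Phi> x)" if x: "x \<in> topspace X" for x
  proof (rule lipschitz_onI)
    fix s t :: real
    show "dist (\<Phi> x s) (\<Phi> x t) \<le> 4 * dist s t"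
    proof (cases "s \<le> t")
      case True then show ?thesis using lip[OF x True] mono[OF x True] by (simp add: dist_real_def)
    next
      case False then show ?thesis using lip[OF x, of t s] mono[OF x, of t s] by (simp add: dist_real_def)
    qed
  qed simp
  have lo: "\<Phi> x (-1) \<le> 0" if x: "x \<in> topspace X" for x
  proof -
    have "\<Phi> x (-1) \<le> (\<Sum>n. (0::real))"
      unfolding \<Phi>_def
    proof (rule suminf_le)
      fix n show "(1/2::real)^n * P n x (-1) \<le> 0"
        using bdb[OF x, of n] unfolding P_def by (auto simp: max_def mult_nonneg_nonpos)
    qed (auto intro: summ x)
    then show ?thesis by simp
  qed
  have hi: "0 \<le> \<Phi> x 1" if x: "x \<in> topspace X" for x
    unfolding \<Phi>_def
  proof (rule suminf_nonneg)
    fix n show "0 \<le> (1/2::real)^n * P n x 1"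
      using bda[OF x, of n] unfolding P_def by (auto simp: max_def)
  qed (auto intro: summ x)
  have ex: "\<exists>t. -1 \<le> t \<and> t \<le> 1 \<and> \<Phi> x t = 0" if x: "x \<in> topspace X" for x
    using IVT'[of "\<Phi> x" "-1" 0 1] lo[OF x] hi[OF x]
      lipschitz_on_continuous_on[OF lipschitz_on_subset[OF lipsch[OF x]]] by auto
  define \<phi> where "\<phi> x = (SOME t. -1 \<le> t \<and> t \<le> 1 \<and> \<Phi> x t = 0)" for x
  have \<phi>: "-1 \<le> \<phi> x \<and> \<phi> x \<le> 1 \<and> \<Phi> x (\<phi> x) = 0" if x: "x \<in> topspace X" for x
    unfolding \<phi>_def by (rule someI_ex[OF ex[OF x]])
  have lt_iff: "\<phi> x < r \<longleftrightarrow> \<Phi> x r > 0" if x: "x \<in> topspace X" for x r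
    using \<phi>[OF x] strict[OF x, of "\<phi> x" r] mono[OF x, of r "\<phi> x"] by force
  have gt_iff: "\<phi> x > r \<longleftrightarrow> \<Phi> x r < 0" if x: "x \<in> topspace X" for x r
    using \<phi>[OF x] strict[OF x, of r "\<phi> x"] mono[OF x, of "\<phi> x" r] by force
  have contP: "continuous_map X euclideanreal (\<lambda>x. \<Phi> x r)" for r
  proof -
    have ul: "uniform_limit (topspace X) (\<lambda>N x. \<Sum>i<N. (1/2::real)^i * P i x r) (\<lambda>x. \<Phi> x r) sequentially"
      unfolding \<Phi>_def
      by (rule Weierstrass_m_test[where M = "\<lambda>n. (1/2::real)^n * (\<bar>r\<bar> + 1)"])
         (auto simp: abs_mult intro!: mult_left_mono Pbd summable_mult2)
    have cP: "continuous_map X euclideanreal (\<lambda>x. P i x r)" for i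
      unfolding P_def by (intro continuous_map_diff continuous_map_real_max conta contb continuous_map_const[THEN iffD2]) auto
    have "\<forall>\<^sub>F N in sequentially. continuous_map X euclideanreal (\<lambda>x. \<Sum>i<N. (1/2::real)^i * P i x r)"
      by (intro always_eventually allI continuous_map_sum continuous_map_real_mult cP) auto
    then show ?thesis
      using Met_TC.continuous_map_uniform_limit[where F=sequentially and X=X and f="\<lambda>N x. \<Sum>i<N. (1/2::real)^i * P i x r" and g="\<lambda>x. \<Phi> x r"]
      using ul unfolding uniform_limit_iff by auto
  qed
  have cont\<phi>: "continuous_map X euclideanreal \<phi>"
    unfolding continuous_map_upper_lower_semicontinuous_lt
  proof (intro allI conjI)
    fix r
    have "{x \<in> topspace X. r < \<phi> x} = {x \<in> topspace X. \<Phi> x r \<in> {..<0}}"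
      using gt_iff by auto
    then show "openin X {x \<in> topspace X. r < \<phi> x}"
      using openin_continuous_map_preimage[OF contP[of r], of "{..<0}"] by (simp add: vimage_def)
    have "{x \<in> topspace X. \<phi> x < r} = {x \<in> topspace X. \<Phi> x r \<in> {0<..}}"
      using lt_iff by auto
    then show "openin X {x \<in> topspace X. \<phi> x < r}"
      using openin_continuous_map_preimage[OF contP[of r], of "{0<..}"] by (simp add: vimage_def)
  qed
  have neg: "suminf f < 0" if "summable f" "\<And>n. f n \<le> 0" "f i < 0" for f :: "nat \<Rightarrow> real" and i
    using suminf_pos2[of "\<lambda>n. - f n" i] that suminf_minus[of f] summable_minus[OF that(1)] by auto
  show ?thesis
  proof (intro exI conjI ballI impI allI)
    show "continuous_map X euclideanreal \<phi>" by (fact cont\<phi>)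
    fix x assume x: "x \<in> topspace X"
    show "-1 \<le> \<phi> x" "\<phi> x \<le> 1" using \<phi>[OF x] by auto
    {
      assume A: "\<forall>n. \<phi> x \<le> b n x"
      fix n show "a n x \<le> \<phi> x"
      proof (rule ccontr)
        assume "\<not> a n x \<le> \<phi> x"
        then have "\<Phi> x (\<phi> x) < 0"
          unfolding \<Phi>_def
        proof (intro neg[where i=n] summ x)
          have "P m x (\<phi> x) \<le> 0" for m using A[rule_format, of m] unfolding P_def by auto
          then show "(1/2::real)^m * P m x (\<phi> x) \<le> 0" for m by (simp add: mult_nonneg_nonpos)
          have "P n x (\<phi> x) < 0" using A[rule_format, of n] \<open>\<not> a n x \<le> \<phi> x\<close> unfolding P_def by auto
          then show "(1/2::real)^n * P n x (\<phi> x) < 0" by (simp add: mult_pos_neg)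
        qed
        then show False using \<phi>[OF x] by simp
      qed
    }
    {
      assume A: "\<forall>n. a n x \<le> \<phi> x"
      fix n show "\<phi> x \<le> b n x"
      proof (rule ccontr)
        assume "\<not> \<phi> x \<le> b n x"
        then have "\<Phi> x (\<phi> x) > 0"
          unfolding \<Phi>_def
        proof (intro suminf_pos2[where i=n] summ x)
          have "P m x (\<phi> x) \<ge> 0" for m using A[rule_format, of m] unfolding P_def by auto
          then show "0 \<le> (1/2::real)^m * P m x (\<phi> x)" for m by simp
          have "P n x (\<phi> x) > 0" using A[rule_format, of n] \<open>\<not> \<phi> x \<le> b n x\<close> unfolding P_def by auto
          then show "0 < (1/2::real)^n * P n x (\<phi> x)" by simp
        qed
        then show False using \<phi>[OF x] by simp
      qed
    }
  qed
qed



definition sg :: "real \<Rightarrow> real" where "sg r = r / (1 + \<bar>r\<bar>)"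
definition rg :: "real \<Rightarrow> real" where "rg y = y / (1 - \<bar>y\<bar>)"

lemma sg_bound: "-1 < sg r \<and> sg r < 1"
  unfolding sg_def by (auto simp: divide_simps abs_if)

lemma sg_strict: assumes "r < s" shows "sg r < sg s"
proof -
  have pr: "0 < 1 + \<bar>r\<bar>" and ps: "0 < 1 + \<bar>s\<bar>" by auto
  have "r * (1 + \<bar>s\<bar>) < s * (1 + \<bar>r\<bar>)"
  proof (cases "0 \<le> r")
    case True then show ?thesis using assms by (simp add: algebra_simps)
  next
    case False
    then show ?thesis
    proof (cases "0 \<le> s")
      case True
      have "r * (1 + \<bar>s\<bar>) < 0" using False ps by (simp add: mult_neg_pos)
      moreover have "0 \<le> s * (1 + \<bar>r\<bar>)" using True by simp
      ultimately show ?thesis by linarith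
    next
      case False2: False
      then show ?thesis using False assms by (simp add: algebra_simps)
    qed
  qed
  then show ?thesis unfolding sg_def using pr ps by (simp add: divide_simps)
qed

lemma rg_sg: "rg (sg r) = r"
  unfolding sg_def rg_def by (auto simp: divide_simps abs_if)

lemma sg_rg: "\<bar>y\<bar> < 1 \<Longrightarrow> sg (rg y) = y"
  unfolding sg_def rg_def by (auto simp: divide_simps abs_if)

definition T :: "ereal \<Rightarrow> real" where
  "T e = (case e of ereal r \<Rightarrow> sg r | PInfty \<Rightarrow> 1 | MInfty \<Rightarrow> -1)"
definition S :: "real \<Rightarrow> ereal" where
  "S y = (if 1 \<le> y then \<infinity> else if y \<le> -1 then -\<infinity> else ereal (rg y))"

lemma T_bound: "-1 \<le> T e \<and> T e \<le> 1"
  using sg_bound by (cases e) (auto simp: T_def less_imp_le)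

lemma T_strict: "e < e' \<Longrightarrow> T e < T e'"
  using sg_bound by (cases e; cases e') (auto simp: T_def sg_strict)

lemma T_less_iff: "T e < T e' \<longleftrightarrow> e < e'"
  by (metis T_strict less_asym not_less_iff_gr_or_eq)

lemma T_le_iff: "T e \<le> T e' \<longleftrightarrow> e \<le> e'"
  by (meson T_less_iff not_le)

lemma S_T: "S (T e) = e"
  using sg_bound[of "real_of_ereal e"] by (cases e) (auto simp: T_def S_def rg_sg)

lemma T_S: "-1 \<le> y \<Longrightarrow> y \<le> 1 \<Longrightarrow> T (S y) = y"
  by (auto simp: T_def S_def sg_rg)

lemma L1: assumes "t \<le> T e" shows "S t \<le> e"
proof (cases "t < -1")
  case True then show ?thesis by (simp add: S_def)
next
  case False
  then have "T (S t) \<le> T e" using assms T_S[of t] T_bound[of e] by simp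
  then show ?thesis by (simp add: T_le_iff)
qed

lemma L2: assumes "T e \<le> s" shows "e \<le> S s"
proof (cases "1 < s")
  case True then show ?thesis by (simp add: S_def)
next
  case False
  then have "T e \<le> T (S s)" using assms T_S[of s] T_bound[of e] by simp
  then show ?thesis by (simp add: T_le_iff)
qed

lemma L4: assumes "-1 \<le> s" "t \<le> 1" "S t \<le> S s" shows "t \<le> s"
proof (cases "t < -1 \<or> 1 < s")
  case True then show ?thesis using assms by auto
next
  case False
  then have "T (S t) \<le> T (S s)" using assms(3) by (simp add: T_le_iff)
  then show ?thesis using False assms T_S[of t] T_S[of s] by simp
qed

lemma L5: "-1 \<le> y \<Longrightarrow> y \<le> 1 \<Longrightarrow> S y < e \<Longrightarrow> y < T e"
  by (metis T_S T_less_iff)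

lemma L6: "-1 \<le> y \<Longrightarrow> y \<le> 1 \<Longrightarrow> e < S y \<Longrightarrow> T e < y"
  by (metis T_S T_less_iff)

lemma contT:
  assumes "continuous_map X euclidean (k :: 'a \<Rightarrow> ereal)"
  shows "continuous_map X euclideanreal (\<lambda>x. T (k x))"
  unfolding continuous_map_upper_lower_semicontinuous_lt
proof (intro allI conjI)
  fix a :: real
  have ko: "openin X {x \<in> topspace X. c < k x}" "openin X {x \<in> topspace X. k x < c}" for c
    using assms unfolding continuous_map_upper_lower_semicontinuous_lt by auto
  show "openin X {x \<in> topspace X. a < T (k x)}"
  proof (cases "a < -1 \<or> 1 \<le> a")
    case True
    show ?thesis
    proof (cases "a < -1")
      case True
      then have "{x \<in> topspace X. a < T (k x)} = topspace X"
        using T_bound by (auto intro: less_le_trans)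
      then show ?thesis by simp
    next
      case False
      then have "{x \<in> topspace X. a < T (k x)} = {}"
        using T_bound \<open>a < -1 \<or> 1 \<le> a\<close> by (auto simp: not_less intro: order_trans)
      then show ?thesis by (metis openin_empty)
    qed
  next
    case False
    then have "{x \<in> topspace X. a < T (k x)} = {x \<in> topspace X. S a < k x}"
      using T_less_iff[of "S a"] T_S[of a] by auto
    then show ?thesis using ko by simp
  qed
  show "openin X {x \<in> topspace X. T (k x) < a}"
  proof (cases "a \<le> -1 \<or> 1 < a")
    case True
    show ?thesis
    proof (cases "1 < a")
      case True
      then have "{x \<in> topspace X. T (k x) < a} = topspace X"
        using T_bound by (auto intro: le_less_trans)
      then show ?thesis by simp
    next
      case False
      then have "{x \<in> topspace X. T (k x) < a} = {}"
        using T_bound \<open>a \<le> -1 \<or> 1 < a\<close> by (auto simp: not_less intro: order_trans)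
      then show ?thesis by (metis openin_empty)
    qed
  next
    case False
    then have "{x \<in> topspace X. T (k x) < a} = {x \<in> topspace X. k x < S a}"
      using T_less_iff[of _ "S a"] T_S[of a] by auto
    then show ?thesis using ko by simp
  qed
qed

lemma contS:
  assumes "continuous_map X euclideanreal \<phi>" "\<And>x. x \<in> topspace X \<Longrightarrow> -1 \<le> \<phi> x \<and> \<phi> x \<le> 1"
  shows "continuous_map X euclidean (\<lambda>x. S (\<phi> x))"
  unfolding continuous_map_upper_lower_semicontinuous_lt
proof (intro allI conjI)
  fix e :: ereal
  have ko: "openin X {x \<in> topspace X. c < \<phi> x}" "openin X {x \<in> topspace X. \<phi> x < c}" for c
    using assms(1) unfolding continuous_map_upper_lower_semicontinuous_lt by auto
  have p1: "e < S (\<phi> x) \<longleftrightarrow> T e < \<phi> x" "S (\<phi> x) < e \<longleftrightarrow> \<phi> x < T e" if "x \<in> topspace X" for x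
    using T_less_iff[of e "S (\<phi> x)"] T_less_iff[of "S (\<phi> x)" e] T_S[of "\<phi> x"] assms(2)[OF that] by auto
  have "{x \<in> topspace X. e < S (\<phi> x)} = {x \<in> topspace X. T e < \<phi> x}"
    using p1 by auto
  then show "openin X {x \<in> topspace X. e < S (\<phi> x)}" using ko by simp
  have "{x \<in> topspace X. S (\<phi> x) < e} = {x \<in> topspace X. \<phi> x < T e}"
    using p1 by auto
  then show "openin X {x \<in> topspace X. S (\<phi> x) < e}" using ko by simp
qed



theorem proposition2p2:
  fixes X :: "'a topology" and Y :: "'a set"
    and g h f0 :: "'a \<Rightarrow> ereal"
  assumes "functionally_closed X Y"
    and "countable_Hahn_pair X g h"
    and "continuous_map X euclidean f0"
    and "\<forall>y \<in> Y. g y \<le> f0 y \<and> f0 y \<le> h y"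
  shows "\<exists>f. continuous_map X euclidean f \<and> (\<forall>y \<in> Y. f y = f0 y) \<and>
             (\<forall>x \<in> topspace X. g x \<le> f x \<and> f x \<le> h x)"
proof -
  obtain \<alpha> where \<alpha>c: "continuous_map X (top_of_set {0..1::real}) \<alpha>"
    and Y: "Y = {x \<in> topspace X. \<alpha> x = 0}"
    using assms(1) unfolding functionally_closed_def by blast
  have \<alpha>: "continuous_map X euclideanreal \<alpha>" and \<alpha>01: "\<And>x. x \<in> topspace X \<Longrightarrow> 0 \<le> \<alpha> x \<and> \<alpha> x \<le> 1"
    using \<alpha>c unfolding continuous_map_in_subtopology by auto
  obtain gn hn :: "nat \<Rightarrow> 'a \<Rightarrow> ereal" where
    gnc: "\<And>n. continuous_map X euclidean (gn n)" and hnc: "\<And>n. continuous_map X euclidean (hn n)"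
    and gh: "\<And>x. x \<in> topspace X \<Longrightarrow> g x = (INF n. gn n x) \<and> h x = (SUP n. hn n x) \<and> g x \<le> h x"
    using assms(2) unfolding countable_Hahn_pair_def by blast
  have ghle: "g x \<le> h x" if "x \<in> topspace X" for x using gh[OF that] by blast
  have gle: "g x \<le> gn n x" if "x \<in> topspace X" for x n
    using gh[OF that] by (metis INF_lower UNIV_I)
  have hge: "hn n x \<le> h x" if "x \<in> topspace X" for x n
    using gh[OF that] by (metis SUP_upper UNIV_I)
  have ggr: "e \<le> g x" if "x \<in> topspace X" "\<And>n. e \<le> gn n x" for x e
    using gh[OF that(1)] that(2) by (metis INF_greatest)
  have hle: "h x \<le> e" if "x \<in> topspace X" "\<And>n. hn n x \<le> e" for x e
    using gh[OF that(1)] that(2) by (metis SUP_least)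
  define f0r where "f0r x = T (f0 x)" for x
  define Bn where "Bn n x = T (gn n x)" for n x
  define An where "An n x = T (hn n x)" for n x
  define b where "b k x = max (Bn (fst (prod_decode k)) x) (f0r x - real (snd (prod_decode k)) * \<alpha> x)" for k x
  define a where "a k x = min (An (fst (prod_decode k)) x) (f0r x + real (snd (prod_decode k)) * \<alpha> x)" for k x
  define G where "G x = (if \<alpha> x = 0 then max (g x) (f0 x) else g x)" for x
  define H where "H x = (if \<alpha> x = 0 then min (h x) (f0 x) else h x)" for x
  have b_enc: "b (prod_encode (n, m)) x = max (Bn n x) (f0r x - real m * \<alpha> x)" for n m x
    by (simp add: b_def)
  have a_enc: "a (prod_encode (n, m)) x = min (An n x) (f0r x + real m * \<alpha> x)" for n m x
    by (simp add: a_def)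
  have GH: "G x \<le> H x" if x: "x \<in> topspace X" for x
  proof (cases "\<alpha> x = 0")
    case True
    then have "x \<in> Y" using x Y by auto
    then show ?thesis using True assms(4) ghle[OF x] by (auto simp: G_def H_def)
  next
    case False then show ?thesis using ghle[OF x] by (simp add: G_def H_def)
  qed
  have arch: "\<exists>m. 2 < real m * \<alpha> x" if "x \<in> topspace X" "\<alpha> x \<noteq> 0" for x
    using ex_less_of_nat_mult[of "\<alpha> x" 2] \<alpha>01[OF that(1)] that(2) by auto
  have HB: "S t \<le> G x" if x: "x \<in> topspace X" and A: "\<forall>k. t \<le> b k x" for x t
  proof (cases "\<alpha> x = 0")
    case True
    show ?thesis
    proof (cases "t \<le> f0r x")
      case True2: True
      then have "S t \<le> f0 x" unfolding f0r_def by (rule L1)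
      then show ?thesis using True by (simp add: G_def le_max_iff_disj)
    next
      case False
      have "t \<le> Bn n x" for n using A[rule_format, of "prod_encode (n, 0)"] False
        by (simp add: b_enc)
      then have "S t \<le> gn n x" for n unfolding Bn_def by (rule L1)
      then have "S t \<le> g x" using ggr[OF x] by blast
      then show ?thesis by (simp add: G_def le_max_iff_disj)
    qed
  next
    case False
    obtain m where m: "2 < real m * \<alpha> x" using arch[OF x False] by blast
    have "t \<le> Bn n x" for n
    proof -
      have "f0r x - real m * \<alpha> x < Bn n x"
        using m T_bound[of "f0 x"] T_bound[of "gn n x"] unfolding f0r_def Bn_def by linarith
      then show ?thesis using A[rule_format, of "prod_encode (n, m)"] by (simp add: b_enc)
    qed
    then have "S t \<le> gn n x" for n unfolding Bn_def by (rule L1)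
    then have "S t \<le> g x" using ggr[OF x] by blast
    then show ?thesis using False by (simp add: G_def le_max_iff_disj)
  qed
  have HA: "H x \<le> S s" if x: "x \<in> topspace X" and A: "\<forall>k. a k x \<le> s" for x s
  proof (cases "\<alpha> x = 0")
    case True
    show ?thesis
    proof (cases "f0r x \<le> s")
      case True2: True
      then have "f0 x \<le> S s" unfolding f0r_def by (rule L2)
      then show ?thesis using True by (simp add: H_def min_le_iff_disj)
    next
      case False
      have "An n x \<le> s" for n using A[rule_format, of "prod_encode (n, 0)"] False
        by (simp add: a_enc)
      then have "hn n x \<le> S s" for n unfolding An_def by (rule L2)
      then have "h x \<le> S s" using hle[OF x] by blast
      then show ?thesis by (simp add: H_def min_le_iff_disj)
    qed
  next
    case False
    obtain m where m: "2 < real m * \<alpha> x" using arch[OF x False] by blast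
    have "An n x \<le> s" for n
    proof -
      have "An n x < f0r x + real m * \<alpha> x"
        using m T_bound[of "f0 x"] T_bound[of "hn n x"] unfolding f0r_def An_def by linarith
      then show ?thesis using A[rule_format, of "prod_encode (n, m)"] by (simp add: a_enc)
    qed
    then have "hn n x \<le> S s" for n unfolding An_def by (rule L2)
    then have "h x \<le> S s" using hle[OF x] by blast
    then show ?thesis using False by (simp add: H_def min_le_iff_disj)
  qed
  have HB2: "\<forall>k. y \<le> b k x" if x: "x \<in> topspace X" and y: "-1 \<le> y" "y \<le> 1" and lt: "S y < G x" for x y
  proof
    fix k
    obtain n m where k: "k = prod_encode (n, m)" by (metis prod_decode_inverse surj_pair)
    have ge: "y \<le> Bn n x" if "S y < g x"
    proof -
      have "S y < gn n x" using that gle[OF x, of n] by simp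
      then show ?thesis unfolding Bn_def using L5[OF y] by (simp add: less_imp_le)
    qed
    show "y \<le> b k x"
    proof (cases "\<alpha> x = 0")
      case True
      then have "S y < g x \<or> S y < f0 x" using lt by (auto simp: G_def less_max_iff_disj)
      then show ?thesis
      proof
        assume "S y < g x" then show ?thesis using ge by (simp add: k b_enc)
      next
        assume "S y < f0 x" then have "y < f0r x" unfolding f0r_def using L5[OF y] by simp
        then show ?thesis using True by (simp add: k b_enc)
      qed
    next
      case False
      then show ?thesis using ge lt by (simp add: k b_enc G_def)
    qed
  qed
  have HA2: "\<forall>k. a k x \<le> y" if x: "x \<in> topspace X" and y: "-1 \<le> y" "y \<le> 1" and lt: "H x < S y" for x y
  proof
    fix k
    obtain n m where k: "k = prod_encode (n, m)" by (metis prod_decode_inverse surj_pair)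
    have ge: "An n x \<le> y" if "h x < S y"
    proof -
      have "hn n x < S y" using that hge[OF x, of n] by (simp add: le_less_trans)
      then show ?thesis unfolding An_def using L6[OF y] by (simp add: less_imp_le)
    qed
    show "a k x \<le> y"
    proof (cases "\<alpha> x = 0")
      case True
      then have "h x < S y \<or> f0 x < S y" using lt by (auto simp: H_def min_less_iff_disj)
      then show ?thesis
      proof
        assume "h x < S y" then show ?thesis using ge by (simp add: k a_enc)
      next
        assume "f0 x < S y" then have "f0r x < y" unfolding f0r_def using L6[OF y] by simp
        then show ?thesis using True by (simp add: k a_enc)
      qed
    next
      case False
      then show ?thesis using ge lt by (simp add: k a_enc H_def)
    qed
  qed
  have Bnc: "continuous_map X euclideanreal (Bn n)" for n
    unfolding Bn_def by (rule contT[OF gnc])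
  have Anc: "continuous_map X euclideanreal (An n)" for n
    unfolding An_def by (rule contT[OF hnc])
  have f0rc: "continuous_map X euclideanreal f0r"
    unfolding f0r_def by (rule contT[OF assms(3)])
  have bc: "continuous_map X euclideanreal (b k)" for k
    unfolding b_def by (intro continuous_map_real_max continuous_map_diff continuous_map_real_mult Bnc f0rc \<alpha>) auto
  have ac: "continuous_map X euclideanreal (a k)" for k
    unfolding a_def by (intro continuous_map_real_min continuous_map_add continuous_map_real_mult Anc f0rc \<alpha>) auto
  have mnn: "0 \<le> real m * \<alpha> x" if x: "x \<in> topspace X" for m x
    using \<alpha>01[OF x] by simp
  have bbd: "-1 \<le> b k x \<and> b k x \<le> 1" if x: "x \<in> topspace X" for k x
  proof -
    have 1: "-1 \<le> Bn (fst (prod_decode k)) x" "Bn (fst (prod_decode k)) x \<le> 1"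
      using T_bound unfolding Bn_def by auto
    have 2: "f0r x - real (snd (prod_decode k)) * \<alpha> x \<le> 1"
      using T_bound[of "f0 x"] mnn[OF x, of "snd (prod_decode k)"] unfolding f0r_def by linarith
    show ?thesis using 1 2 unfolding b_def by (simp add: le_max_iff_disj)
  qed
  have abd: "-1 \<le> a k x \<and> a k x \<le> 1" if x: "x \<in> topspace X" for k x
  proof -
    have 1: "-1 \<le> An (fst (prod_decode k)) x" "An (fst (prod_decode k)) x \<le> 1"
      using T_bound unfolding An_def by auto
    have 2: "-1 \<le> f0r x + real (snd (prod_decode k)) * \<alpha> x"
      using T_bound[of "f0 x"] mnn[OF x, of "snd (prod_decode k)"] unfolding f0r_def by linarith
    show ?thesis using 1 2 unfolding a_def by (simp add: min_le_iff_disj)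
  qed
  have sep: "(\<exists>n. b n x < t) \<or> (\<exists>n. s < a n x)" if x: "x \<in> topspace X" and st: "s < t" for x s t
  proof (rule ccontr)
    assume "\<not> ?thesis"
    then have A: "\<forall>k. t \<le> b k x" "\<forall>k. a k x \<le> s" by (auto simp: not_less)
    have "S t \<le> S s" using HB[OF x A(1)] GH[OF x] HA[OF x A(2)] by (meson order_trans)
    moreover have "t \<le> 1" using A(1) bbd[OF x, of 0] by (meson order_trans)
    moreover have "-1 \<le> s" using A(2) abd[OF x, of 0] by (meson order_trans)
    ultimately have "t \<le> s" using L4 by blast
    then show False using st by simp
  qed
  obtain \<phi> where \<phi>c: "continuous_map X euclideanreal \<phi>"
    and \<phi>: "\<And>x. x \<in> topspace X \<Longrightarrow> -1 \<le> \<phi> x \<and> \<phi> x \<le> 1 \<and>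
             ((\<forall>n. \<phi> x \<le> b n x) \<longrightarrow> (\<forall>n. a n x \<le> \<phi> x)) \<and>
             ((\<forall>n. a n x \<le> \<phi> x) \<longrightarrow> (\<forall>n. \<phi> x \<le> b n x))"
    using core_insert[of X a b, OF ac bc abd bbd sep] by blast
  define f where "f x = S (\<phi> x)" for x
  have fc: "continuous_map X euclidean f"
    unfolding f_def by (rule contS[OF \<phi>c]) (use \<phi> in blast)
  have GfH: "G x \<le> f x \<and> f x \<le> H x" if x: "x \<in> topspace X" for x
  proof
    have y: "-1 \<le> \<phi> x" "\<phi> x \<le> 1" using \<phi>[OF x] by auto
    show "G x \<le> f x"
    proof (rule ccontr)
      assume "\<not> G x \<le> f x"
      then have lt: "S (\<phi> x) < G x" by (simp add: f_def not_le)
      have "\<forall>k. a k x \<le> \<phi> x" using HB2[OF x y lt] \<phi>[OF x] by blast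
      then have "H x \<le> S (\<phi> x)" by (rule HA[OF x])
      then show False using lt GH[OF x] by simp
    qed
    show "f x \<le> H x"
    proof (rule ccontr)
      assume "\<not> f x \<le> H x"
      then have lt: "H x < S (\<phi> x)" by (simp add: f_def not_le)
      have "\<forall>k. \<phi> x \<le> b k x" using HA2[OF x y lt] \<phi>[OF x] by blast
      then have "S (\<phi> x) \<le> G x" by (rule HB[OF x])
      then show False using lt GH[OF x] by simp
    qed
  qed
  show ?thesis
  proof (intro exI conjI ballI)
    show "continuous_map X euclidean f" by (fact fc)
    fix y assume "y \<in> Y"
    then have y: "y \<in> topspace X" "\<alpha> y = 0" using Y by auto
    show "f y = f0 y" using GfH[OF y(1)] y(2) by (simp add: G_def H_def antisym)
  next
    fix x assume x: "x \<in> topspace X"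
    show "g x \<le> f x" using GfH[OF x] by (auto simp: G_def split: if_splits)
    show "f x \<le> h x" using GfH[OF x] by (auto simp: H_def split: if_splits)
  qed
qed

end
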